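(* Let $p$ be an odd prime. For every integer $0<s<p-1$, the polynomial $b_{1,s}(\alpha)\in\mathbb F_p[\alpha]$ satisfies \[ b_{1,s}(\alpha)\cdot b_{1,s}(-\alpha)=1-\alpha^{p-1}. \] In particular, $b_{1,s}(\alpha)$ has degree $(p-1)/2$ and factorizes into a product of distinct linear factors in $\mathbb F_p[\alpha]$.
   Context: $\mathbb F_p$ is the field of $p$ elements, $\alpha$ an indeterminate, $\binom{x}{m}=x(x-1)\cdots(x-m+1)/m!$. For integers $0<r,s<p$ (interpreted as elements of $\mathbb F_p$), $b_{r,s}(\alpha)=\sum_{k=0}^{p-1}(-r/s)^k\binom{r\alpha-1}{p-1-k}\binom{s\alpha-1}{k}\in\mathbb F_p[\alpha]$. *)

theory Defs
  imports "Berlekamp_Zassenhaus.Finite_Field" "HOL-Computational_Algebra.Polynomial"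
begin

definition pbinom :: "'a::field poly \<Rightarrow> nat \<Rightarrow> 'a poly" where
  "pbinom x m = smult (inverse (of_nat (fact m))) (\<Prod>i<m. x - [:of_nat i:])"

definition bpoly :: "nat \<Rightarrow> nat \<Rightarrow> 'p::prime_card mod_ring poly" where
  "bpoly r s = (let p = CARD('p); rr = (of_nat r :: 'p mod_ring); ss = of_nat s in
     (\<Sum>k<p. smult ((- (rr / ss)) ^ k)
        (pbinom (smult rr [:0,1:] - 1) (p - 1 - k) * pbinom (smult ss [:0,1:] - 1) k)))"

end

theory Submission
  imports Defs
begin


lemma prod_int_binom:
  "(\<Prod>i<m. int N - int i) = int (fact m * (N choose m))"
proof (induction m)
  case 0 then show ?case by simp
next
  case (Suc m)
  have key: "(N - m) * (N choose m) = Suc m * (N choose Suc m)"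
  proof (cases "m \<le> N")
    case False then show ?thesis by simp
  next
    case True
    then obtain r where r: "N = m + r" using le_Suc_ex by blast
    have "Suc N * (N choose m) = ((N choose m) + (N choose Suc m)) * Suc m"
      using Suc_times_binomial_eq[of N m] by simp
    hence "(m + r + 1) * (N choose m) = (m + 1) * (N choose m) + (m+1) * (N choose Suc m)"
      unfolding r by (simp add: algebra_simps)
    hence "r * (N choose m) = (m+1) * (N choose Suc m)" by (simp add: algebra_simps)
    thus ?thesis using r by simp
  qed
  have "(\<Prod>i<Suc m. int N - int i) = int (fact m * (N choose m)) * (int N - int m)"
    using Suc by simp
  also have "\<dots> = int (fact m * ((N - m) * (N choose m)))"
  proof (cases "m \<le> N")
    case True then show ?thesis by (simp add: of_nat_diff algebra_simps)
  next
    case False then show ?thesis by simp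
  qed
  also have "\<dots> = int (fact (Suc m) * (N choose Suc m))"
    by (simp only: key) (simp add: algebra_simps)
  finally show ?case .
qed

lemma fact_nonzero_mod_ring:
  assumes "m < CARD('p::prime_card)"
  shows "(of_nat (fact m) :: 'p mod_ring) \<noteq> 0"
proof
  assume "(of_nat (fact m) :: 'p mod_ring) = 0"
  hence "CARD('p) dvd fact m" by (rule of_nat_0_mod_ring_dvd)
  hence "CARD('p) \<le> m" using prime_dvd_fact_iff[OF prime_card] by blast
  with assms show False by simp
qed

lemma poly_pbinom_nat:
  assumes "m < CARD('p::prime_card)" and "poly y v = (of_nat N :: 'p mod_ring)"
  shows "poly (pbinom y m) v = of_nat (N choose m)"
proof -
  have "(\<Prod>i<m. poly y v - of_nat i) = (of_int (\<Prod>i<m. int N - int i) :: 'p mod_ring)"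
    using assms(2) by (simp add: of_int_prod)
  also have "\<dots> = of_nat (fact m) * of_nat (N choose m)"
    by (metis of_int_of_nat_eq of_nat_mult prod_int_binom)
  finally have P: "(\<Prod>i<m. poly y v - of_nat i) = of_nat (fact m) * of_nat (N choose m)" .
  show ?thesis
    unfolding pbinom_def using fact_nonzero_mod_ring[OF assms(1)]
    by (simp add: poly_prod P)
qed

lemma prod_minus_one:
  "(\<Prod>i<m. (-1 :: 'a::comm_ring_1) - of_nat i) = (-1)^m * of_nat (fact m)"
  by (induction m) (auto simp: algebra_simps)

lemma poly_pbinom_m1:
  assumes "m < CARD('p::prime_card)" and "poly y v = (-1 :: 'p mod_ring)"
  shows "poly (pbinom y m) v = (-1)^m"
  unfolding pbinom_def using fact_nonzero_mod_ring[OF assms(1)] assms(2)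
  by (simp add: poly_prod prod_minus_one)

lemma degree_pbinom:
  assumes "degree y \<le> 1"
  shows "degree (pbinom y m) \<le> m"
proof -
  have "degree (\<Prod>i<m. y - [:of_nat i:]) \<le> (\<Sum>i<m. degree (y - [:of_nat i:]))"
    using degree_prod_sum_le[of "{..<m}" "\<lambda>i. y - [:of_nat i:]"] by (simp add: o_def)
  also have "\<dots> \<le> (\<Sum>i<m. 1)"
    by (intro sum_mono degree_diff_le) (use assms in auto)
  finally show ?thesis unfolding pbinom_def
    using degree_smult_le order_trans by fastforce
qed

lemma coeff_lin_power:
  "coeff ([:1, c:] ^ N) i = of_nat (N choose i) * c ^ i"
proof (induction N arbitrary: i)
  case 0 then show ?case by (cases i) auto
next
  case (Suc N)
  have e: "[:1, c:] ^ Suc N = [:1,c:] ^ N + pCons 0 (smult c ([:1, c:] ^ N))"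
    by (simp add: mult_pCons_left)
  show ?case
  proof (cases i)
    case 0 then show ?thesis by (simp add: e Suc)
  next
    case (Suc j) then show ?thesis by (simp add: e Suc.IH algebra_simps)
  qed
qed

lemma pow_card_minus1:
  assumes "(x :: 'p::prime_card mod_ring) \<noteq> 0"
  shows "x ^ (CARD('p) - 1) = 1"
proof -
  have c: "card (UNIV :: 'p mod_ring set) = CARD('p)" by simp
  have "x ^ CARD('p) = x" using finite_field_power_card_eq_same[of x] by (simp only: c)
  moreover have "CARD('p) = Suc (CARD('p) - 1)" using prime_gt_1_nat[OF prime_card] by simp
  ultimately have "x * x ^ (CARD('p) - 1) = x" by (metis power_Suc)
  thus ?thesis using assms by simp
qed


definition Dp :: "nat \<Rightarrow> 'p::prime_card mod_ring poly" where
  "Dp s = [:1, of_nat s:] * [:1, -1:] ^ s - 1"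
definition Ep :: "nat \<Rightarrow> 'p::prime_card mod_ring poly" where
  "Ep s = [:1, -1:] ^ (s - 1)"
definition cc :: "nat \<Rightarrow> nat \<Rightarrow> 'p::prime_card mod_ring" where
  "cc s m = coeff (Dp s ^ m * Ep s) (CARD('p) - 1)"
definition Bexp :: "nat \<Rightarrow> 'p::prime_card mod_ring poly" where
  "Bexp s = (\<Sum>m<CARD('p). smult (cc s m) (pbinom [:-1, 1:] m))"

lemma bpoly1:
  "(bpoly 1 s :: 'p::prime_card mod_ring poly) = (\<Sum>k<CARD('p).
     smult ((- inverse (of_nat s)) ^ k)
       (pbinom [:-1, 1:] (CARD('p) - 1 - k) * pbinom [:-1, of_nat s:] k))"
  by (simp add: bpoly_def Let_def divide_inverse one_pCons)

lemma Dp_low: "coeff (Dp s) 0 = 0" "coeff (Dp s) 1 = 0"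
  by (simp_all add: Dp_def mult_pCons_left coeff_lin_power)

lemma Dp_pow_low:
  "\<forall>j < 2 * m. coeff ((Dp s :: 'p::prime_card mod_ring poly) ^ m * R) j = 0"
proof (induction m arbitrary: R)
  case 0 then show ?case by simp
next
  case (Suc m)
  show ?case
  proof (intro allI impI)
    fix j assume j: "j < 2 * Suc m"
    have l1: "coeff (Dp s :: 'p mod_ring poly) 0 = 0" by (rule Dp_low)
    have l2: "coeff (Dp s :: 'p mod_ring poly) 1 = 0" by (rule Dp_low)
    have "coeff ((Dp s :: 'p mod_ring poly) * (Dp s ^ m * R)) j = 0"
      unfolding coeff_mult[of "Dp s :: 'p mod_ring poly" "Dp s ^ m * R" j]
    proof (rule sum.neutral, intro ballI)
      fix i assume "i \<in> {..j}"
      hence ij: "i \<le> j" by simp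
      show "coeff (Dp s :: 'p mod_ring poly) i * coeff (Dp s ^ m * R) (j - i) = 0"
      proof (cases "i < 2")
        case True
        hence "i = 0 \<or> i = 1" by auto
        thus ?thesis using l1 l2 by auto
      next
        case False
        hence "j - i < 2 * m" using j ij by arith
        thus ?thesis using Suc.IH[of R] by simp
      qed
    qed
    thus "coeff ((Dp s :: 'p mod_ring poly) ^ Suc m * R) j = 0" by (simp only: power_Suc mult.assoc)
  qed
qed

lemma cc_zero:
  assumes "CARD('p::prime_card) - 1 < 2 * m"
  shows "cc s m = (0 :: 'p mod_ring)"
  unfolding cc_def using Dp_pow_low[of m s "Ep s"] assms by blast

lemma degree_Bexp: "degree (Bexp s :: 'p::prime_card mod_ring poly) \<le> (CARD('p) - 1) div 2"
  unfolding Bexp_def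
proof (rule degree_sum_le)
  fix m assume "m \<in> {..<CARD('p)}"
  show "degree (smult (cc s m) (pbinom [:-1, 1:] m) :: 'p mod_ring poly) \<le> (CARD('p) - 1) div 2"
  proof (cases "CARD('p) - 1 < 2 * m")
    case True then show ?thesis by (simp add: cc_zero)
  next
    case False
    hence "m \<le> (CARD('p) - 1) div 2" by linarith
    moreover have "degree (pbinom [:-1, 1:] m :: 'p mod_ring poly) \<le> m"
      by (rule degree_pbinom) simp
    ultimately show ?thesis
      using degree_smult_le[of "cc s m" "pbinom [:-1, 1:] m :: 'p mod_ring poly"] by linarith
  qed
qed simp

lemma degree_bpoly1: "degree (bpoly 1 s :: 'p::prime_card mod_ring poly) \<le> CARD('p) - 1"
  unfolding bpoly1
proof (rule degree_sum_le)
  fix k assume k: "k \<in> {..<CARD('p)}"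
  have "degree (pbinom [:-1, 1:] (CARD('p) - 1 - k) * pbinom [:-1, of_nat s:] k :: 'p mod_ring poly)
     \<le> (CARD('p) - 1 - k) + k"
    by (rule order_trans[OF degree_mult_le add_mono]; rule degree_pbinom; simp)
  also have "\<dots> = CARD('p) - 1" using k by simp
  finally have d: "degree (pbinom [:-1, 1:] (CARD('p) - 1 - k) * pbinom [:-1, of_nat s:] k :: 'p mod_ring poly)
     \<le> CARD('p) - 1" .
  show "degree (smult ((- inverse (of_nat s)) ^ k)
       (pbinom [:-1, 1:] (CARD('p) - 1 - k) * pbinom [:-1, of_nat s:] k) :: 'p mod_ring poly)
       \<le> CARD('p) - 1"
    using d degree_smult_le[of "(- inverse (of_nat s)) ^ k" "pbinom [:-1, 1:] (CARD('p) - 1 - k) * pbinom [:-1, of_nat s:] k :: 'p mod_ring poly"]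
    by linarith
qed simp

lemma ofnat_nz:
  assumes "0 < s" "s < CARD('p::prime_card)"
  shows "(of_nat s :: 'p mod_ring) \<noteq> 0"
proof
  assume "(of_nat s :: 'p mod_ring) = 0"
  hence "CARD('p) dvd s" by (rule of_nat_0_mod_ring_dvd)
  thus False using assms by (simp add: nat_dvd_not_less)
qed

lemma inv_pow:
  assumes "(x :: 'p::prime_card mod_ring) \<noteq> 0" "i < CARD('p)"
  shows "inverse x ^ (CARD('p) - 1 - i) = x ^ i"
proof -
  have "x ^ (CARD('p) - 1 - i) * x ^ i = x ^ (CARD('p) - 1)"
    using assms(2) by (simp add: power_add[symmetric])
  also have "\<dots> = 1" using pow_card_minus1[OF assms(1)] .
  finally have "inverse (x ^ (CARD('p) - 1 - i)) = x ^ i" by (rule inverse_unique)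
  thus ?thesis by (simp add: power_inverse)
qed

lemma bpoly_eval:
  assumes "poly [:-1, 1:] x = (of_nat N1 :: 'p::prime_card mod_ring)"
    and "poly [:-1, of_nat s:] x = (of_nat N2 :: 'p mod_ring)"
  shows "poly (bpoly 1 s) x = (\<Sum>k<CARD('p). (- inverse (of_nat s)) ^ k *
            (of_nat (N1 choose (CARD('p) - 1 - k)) * of_nat (N2 choose k)))"
  unfolding bpoly1 poly_sum
proof (intro sum.cong refl)
  fix k assume "k \<in> {..<CARD('p)}"
  hence k: "CARD('p) - 1 - k < CARD('p)" "k < CARD('p)" by auto
  show "poly (smult ((- inverse (of_nat s)) ^ k)
       (pbinom [:-1, 1:] (CARD('p) - 1 - k) * pbinom [:-1, of_nat s:] k)) x =
    (- inverse (of_nat s)) ^ k * (of_nat (N1 choose (CARD('p) - 1 - k)) * of_nat (N2 choose k))"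
    by (simp only: poly_smult poly_mult poly_pbinom_nat[OF k(1) assms(1)] poly_pbinom_nat[OF k(2) assms(2)])
qed

lemma coeff_of_nat_mult: "coeff (of_nat c * P) j = of_nat c * coeff P j"
  by (induction c) (auto simp: algebra_simps)



lemma Dp_plus1: "Dp s + 1 = [:1, of_nat s:] * [:1, -1:] ^ s"
  by (simp add: Dp_def)

lemma bexp_eval:
  assumes "1 \<le> n" "n \<le> CARD('p::prime_card)" "0 < s"
  shows "poly (Bexp s :: 'p mod_ring poly) (of_nat n) =
    (\<Sum>i\<le>CARD('p) - 1. of_nat ((n-1) choose i) * of_nat s ^ i *
        (of_nat ((s*n-1) choose (CARD('p) - 1 - i)) * (-1) ^ (CARD('p) - 1 - i)))"
proof -
  let ?p = "CARD('p)"
  let ?D = "Dp s :: 'p mod_ring poly"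
  have pv: "poly [:-1, 1:] (of_nat n) = (of_nat (n-1) :: 'p mod_ring)"
    using assms by (simp add: of_nat_diff)
  have S1: "poly (Bexp s :: 'p mod_ring poly) (of_nat n) = (\<Sum>m<?p. cc s m * of_nat ((n-1) choose m))"
    unfolding Bexp_def poly_sum
    by (intro sum.cong refl) (simp add: poly_pbinom_nat[OF _ pv])
  have S2: "(\<Sum>m<?p. cc s m * of_nat ((n-1) choose m)) = coeff ((\<Sum>m<?p. of_nat ((n-1) choose m) * ?D ^ m) * Ep s) (?p - 1)"
    unfolding sum_distrib_right coeff_sum cc_def
    by (intro sum.cong refl) (simp add: coeff_of_nat_mult mult.assoc)
  have S3a: "(\<Sum>m<?p. of_nat ((n-1) choose m) * ?D ^ m) = (\<Sum>m\<le>n-1. of_nat ((n-1) choose m) * ?D ^ m)"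
  proof (rule sum.mono_neutral_right)
    show "{..n - 1} \<subseteq> {..<?p}" using assms by auto
    show "\<forall>i\<in>{..<?p} - {..n - 1}. of_nat ((n-1) choose i) * ?D ^ i = 0" by (auto simp: binomial_eq_0)
  qed auto
  have S3b: "(\<Sum>m\<le>n-1. of_nat ((n-1) choose m) * ?D ^ m) = (?D + 1) ^ (n-1)"
    by (simp add: binomial_ring)
  have S4: "(?D + 1) ^ (n-1) * Ep s = [:1, of_nat s:] ^ (n-1) * [:1, -1:] ^ (s*n - 1)"
  proof -
    have e: "s * n - 1 = s * (n-1) + (s - 1)" using assms
      by (cases n) (auto simp: algebra_simps)
    show ?thesis unfolding Dp_plus1 Ep_def e
      by (simp only: power_mult_distrib power_add power_mult mult.assoc)
  qed
  have S5: "coeff ([:1, of_nat s:] ^ (n-1) * [:1, -1:] ^ (s*n - 1) :: 'p mod_ring poly) (?p - 1) =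
       (\<Sum>i\<le>?p - 1. of_nat ((n-1) choose i) * of_nat s ^ i *
        (of_nat ((s*n-1) choose (?p - 1 - i)) * (-1) ^ (?p - 1 - i)))"
    unfolding coeff_mult by (simp only: coeff_lin_power)
  have S34: "coeff ((\<Sum>m<?p. of_nat ((n-1) choose m) * ?D ^ m) * Ep s) (?p - 1)
     = coeff ([:1, of_nat s:] ^ (n-1) * [:1, -1:] ^ (s*n - 1) :: 'p mod_ring poly) (?p - 1)"
    unfolding S3a S3b S4 by (rule refl)
  show ?thesis by (rule trans[OF S1 trans[OF S2 trans[OF S34 S5]]])
qed

lemma bpoly_eq_Bexp:
  assumes "0 < s" "s < CARD('p::prime_card)"
  shows "(bpoly 1 s :: 'p mod_ring poly) = Bexp s"
proof (rule poly_eqI_degree[where A = UNIV])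
  let ?p = "CARD('p)"
  have p1: "1 < ?p" using prime_gt_1_nat[OF prime_card] .
  have card: "card (UNIV :: 'p mod_ring set) = ?p" by simp
  show "degree (bpoly 1 s :: 'p mod_ring poly) < card (UNIV :: 'p mod_ring set)"
  proof -
    have "degree (bpoly 1 s :: 'p mod_ring poly) \<le> ?p - 1" by (rule degree_bpoly1)
    thus ?thesis using p1 unfolding card by linarith
  qed
  show "degree (Bexp s :: 'p mod_ring poly) < card (UNIV :: 'p mod_ring set)"
  proof -
    have "degree (Bexp s :: 'p mod_ring poly) \<le> (?p - 1) div 2" by (rule degree_Bexp)
    thus ?thesis using p1 unfolding card by linarith
  qed
  fix x :: "'p mod_ring"
  obtain i where i: "i < ?p" "x = of_nat i" using surj_of_nat_mod_ring by blast
  define n where "n = (if i = 0 then ?p else i)"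
  have n: "1 \<le> n" "n \<le> ?p" "x = of_nat n" using i p1 by (auto simp: n_def)
  have sn: "1 \<le> s * n" using n assms by simp
  have pv1: "poly [:-1, 1:] x = (of_nat (n-1) :: 'p mod_ring)"
    using n by (simp add: of_nat_diff)
  have pv2: "poly [:-1, of_nat s:] x = (of_nat (s*n-1) :: 'p mod_ring)"
    using n sn by (simp add: of_nat_diff)
  have ss: "(of_nat s :: 'p mod_ring) \<noteq> 0" using ofnat_nz assms by blast
  have T1: "poly (bpoly 1 s) x = (\<Sum>k<?p. (- inverse (of_nat s)) ^ k *
            (of_nat ((n-1) choose (?p - 1 - k)) * of_nat ((s*n-1) choose k)))"
    by (rule bpoly_eval[OF pv1 pv2])
  have T2: "(\<Sum>k<?p. (- inverse (of_nat s)) ^ k *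
            (of_nat ((n-1) choose (?p - 1 - k)) * of_nat ((s*n-1) choose k))) = (\<Sum>i<?p. (- inverse (of_nat s)) ^ (?p - Suc i) *
            (of_nat ((n-1) choose (?p - 1 - (?p - Suc i))) * of_nat ((s*n-1) choose (?p - Suc i))) :: 'p mod_ring)"
    by (rule sum.nat_diff_reindex[symmetric])
  have T3: "(\<Sum>i<?p. (- inverse (of_nat s)) ^ (?p - Suc i) *
            (of_nat ((n-1) choose (?p - 1 - (?p - Suc i))) * of_nat ((s*n-1) choose (?p - Suc i)))) = (\<Sum>i<?p. of_nat ((n-1) choose i) * of_nat s ^ i *
        (of_nat ((s*n-1) choose (?p - 1 - i)) * (-1) ^ (?p - 1 - i)) :: 'p mod_ring)"
  proof (intro sum.cong refl)
    fix i assume "i \<in> {..<?p}"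
    hence i: "i < ?p" by simp
    have e2: "?p - Suc i = ?p - 1 - i" by simp
    have e3: "?p - 1 - (?p - 1 - i) = i" using i by simp
    have h: "(- inverse (of_nat s :: 'p mod_ring)) ^ (?p - 1 - i) = (-1) ^ (?p - 1 - i) * of_nat s ^ i"
      by (subst power_minus) (simp only: inv_pow[OF ss i])
    show "(- inverse (of_nat s)) ^ (?p - Suc i) *
            (of_nat ((n-1) choose (?p - 1 - (?p - Suc i))) * of_nat ((s*n-1) choose (?p - Suc i))) =
          of_nat ((n-1) choose i) * of_nat s ^ i *
        (of_nat ((s*n-1) choose (?p - 1 - i)) * (-1) ^ (?p - 1 - i) :: 'p mod_ring)"
      unfolding e2 e3 h by (simp only: mult_ac)
  qed
  have ivl: "{..<?p} = {..?p - 1}" using p1 by auto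
  have T4: "(\<Sum>i<?p. of_nat ((n-1) choose i) * of_nat s ^ i *
        (of_nat ((s*n-1) choose (?p - 1 - i)) * (-1) ^ (?p - 1 - i)) :: 'p mod_ring) = poly (Bexp s) x"
    unfolding ivl n(3) by (rule bexp_eval[OF n(1) n(2) assms(1), symmetric])
  show "poly (bpoly 1 s) x = poly (Bexp s) x"
    by (rule trans[OF T1 trans[OF T2 trans[OF T3 T4]]])
qed



lemma bpoly_at0:
  assumes "0 < s" "s < CARD('p::prime_card) - 1" "odd (CARD('p))"
  shows "poly (bpoly 1 s :: 'p mod_ring poly) 0 = 1"
proof -
  let ?p = "CARD('p)"
  let ?t = "- inverse (of_nat s) :: 'p mod_ring"
  have p1: "1 < ?p" using prime_gt_1_nat[OF prime_card] .
  have m1: "poly [:-1, 1:] 0 = (-1 :: 'p mod_ring)" "poly [:-1, of_nat s:] 0 = (-1 :: 'p mod_ring)"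
    by simp_all
  have "poly (bpoly 1 s :: 'p mod_ring poly) 0 = (\<Sum>k<?p. ?t ^ k)"
    unfolding bpoly1 poly_sum
  proof (intro sum.cong refl)
    fix k assume "k \<in> {..<?p}"
    hence k: "?p - 1 - k < ?p" "k < ?p" by auto
    have ev: "even (?p - 1 - k + k)" using assms(3) k by simp
    have "(-1 :: 'p mod_ring) ^ (?p - 1 - k) * (-1) ^ k = 1"
      unfolding power_add[symmetric] using ev by simp
    thus "poly (smult (?t ^ k)
       (pbinom [:-1, 1:] (?p - 1 - k) * pbinom [:-1, of_nat s:] k)) 0 = ?t ^ k"
      by (simp only: poly_smult poly_mult poly_pbinom_m1[OF k(1) m1(1)] poly_pbinom_m1[OF k(2) m1(2)] mult_1_right)
  qed
  also have "\<dots> = 1"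
  proof -
    have ss: "(of_nat s :: 'p mod_ring) \<noteq> 0" by (rule ofnat_nz) (use assms in auto)
    have t1: "?t \<noteq> 1"
    proof
      assume "?t = 1"
      hence "inverse (of_nat s :: 'p mod_ring) = -1" by (simp add: minus_equation_iff)
      hence "(of_nat s :: 'p mod_ring) = -1" by (metis inverse_inverse_eq inverse_minus_eq inverse_1)
      hence "(of_nat (s + 1) :: 'p mod_ring) = 0" by simp
      hence "?p dvd s + 1" by (rule of_nat_0_mod_ring_dvd)
      thus False using assms by (simp add: nat_dvd_not_less)
    qed
    have tp: "?t ^ ?p = ?t"
      using finite_field_power_card_eq_same[of ?t] by simp
    have "?t - 1 \<noteq> 0" using t1 by simp
    thus ?thesis unfolding geometric_sum[OF t1] tp by simp
  qed
  finally show ?thesis .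
qed

lemma bpoly_root:
  assumes "0 < s" "s < CARD('p::prime_card)" "1 \<le> a" "a < CARD('p)"
    and "s * a mod CARD('p) + a < CARD('p)"
  shows "poly (bpoly 1 s :: 'p mod_ring poly) (of_nat a) = 0"
proof -
  let ?p = "CARD('p)"
  define v where "v = s * a mod ?p"
  have pr: "prime ?p" by (rule prime_card)
  have v1: "1 \<le> v"
  proof (rule ccontr)
    assume "\<not> 1 \<le> v"
    hence "?p dvd s * a" unfolding v_def dvd_eq_mod_eq_0 by simp
    hence "?p dvd s \<or> ?p dvd a" using pr prime_dvd_mult_iff by blast
    thus False using assms by (auto simp: nat_dvd_not_less)
  qed
  have pv1: "poly [:-1, 1:] (of_nat a) = (of_nat (a - 1) :: 'p mod_ring)"
    using assms by (simp add: of_nat_diff)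
  have "(of_nat (s * a) :: 'p mod_ring) = of_nat v"
    unfolding v_def using of_nat_mod_CHAR[where 'a="'p mod_ring", of "s*a"] by simp
  hence pv2: "poly [:-1, of_nat s:] (of_nat a) = (of_nat (v - 1) :: 'p mod_ring)"
    using v1 by (simp add: of_nat_diff algebra_simps)
  have "poly (bpoly 1 s :: 'p mod_ring poly) (of_nat a) = (\<Sum>k<?p. (- inverse (of_nat s)) ^ k *
            (of_nat ((a-1) choose (?p - 1 - k)) * of_nat ((v-1) choose k)))"
    by (rule bpoly_eval[OF pv1 pv2])
  also have "\<dots> = 0"
  proof (rule sum.neutral, intro ballI)
    fix k assume "k \<in> {..<?p}"
    have "(a - 1) choose (?p - 1 - k) = 0 \<or> (v - 1) choose k = 0"
    proof (cases "a - 1 < ?p - 1 - k")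
      case True then show ?thesis by simp
    next
      case False
      hence "v - 1 < k" using assms(5) v1 unfolding v_def[symmetric] by arith
      then show ?thesis by simp
    qed
    thus "(- inverse (of_nat s :: 'p mod_ring)) ^ k *
            (of_nat ((a-1) choose (?p - 1 - k)) * of_nat ((v-1) choose k)) = 0"
      by (elim disjE; simp only: of_nat_0 mult_zero_left mult_zero_right)
  qed
  finally show ?thesis .
qed

lemma bpoly_root_pm:
  assumes "0 < s" "s < CARD('p::prime_card) - 1" "(x :: 'p mod_ring) \<noteq> 0"
  shows "poly (bpoly 1 s) x = 0 \<or> poly (bpoly 1 s) (-x) = 0"
proof -
  let ?p = "CARD('p)"
  have pr: "prime ?p" by (rule prime_card)
  obtain a where a: "a < ?p" "x = of_nat a" using surj_of_nat_mod_ring by blast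
  have a1: "1 \<le> a" using a assms(3) by (cases a) auto
  have mx: "-x = of_nat (?p - a)" using a by (simp add: of_nat_diff)
  define v where "v = s * a mod ?p"
  define w where "w = s * (?p - a) mod ?p"
  have ndvd: "\<not> ?p dvd c" if "0 < c" "c < ?p" for c using that by (simp add: nat_dvd_not_less)
  have v1: "1 \<le> v"
  proof (rule ccontr)
    assume "\<not> 1 \<le> v"
    hence "?p dvd s * a" unfolding v_def dvd_eq_mod_eq_0 by simp
    hence "?p dvd s \<or> ?p dvd a" using pr prime_dvd_mult_iff by blast
    thus False using assms a a1 ndvd by auto
  qed
  have w1: "1 \<le> w"
  proof (rule ccontr)
    assume "\<not> 1 \<le> w"
    hence "?p dvd s * (?p - a)" unfolding w_def dvd_eq_mod_eq_0 by simp
    hence "?p dvd s \<or> ?p dvd (?p - a)" using pr prime_dvd_mult_iff by blast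
    thus False using assms a a1 ndvd by auto
  qed
  have vlt: "v < ?p" "w < ?p" using pr unfolding v_def w_def by (auto intro: mod_less_divisor prime_gt_0_nat)
  have "(v + w) mod ?p = (s * a + s * (?p - a)) mod ?p" unfolding v_def w_def by (simp add: mod_add_eq)
  also have "s * a + s * (?p - a) = s * ?p" using a by (simp add: algebra_simps)
  finally have "?p dvd v + w" by (simp add: dvd_eq_mod_eq_0)
  then obtain c where c: "v + w = ?p * c" by blast
  have "c = 1"
  proof -
    have h: "0 < ?p * c" "?p * c < ?p * 2" using v1 vlt unfolding c[symmetric] by auto
    have "0 < c" using h(1) by simp
    moreover have "c < 2" using h(2) by simp
    ultimately show ?thesis by arith
  qed
  hence vw: "v + w = ?p" using c by simp
  have "v + a \<noteq> ?p"
  proof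
    assume "v + a = ?p"
    hence "(s * a + a) mod ?p = 0" unfolding v_def by (metis mod_add_left_eq mod_self)
    hence "?p dvd (s + 1) * a" by (simp add: algebra_simps mod_eq_0_iff_dvd)
    hence "?p dvd (s + 1) \<or> ?p dvd a" using pr prime_dvd_mult_iff by blast
    thus False using assms a a1 ndvd by auto
  qed
  hence "v + a < ?p \<or> w + (?p - a) < ?p" using vw a by arith
  thus ?thesis
  proof
    assume "v + a < ?p"
    hence h: "s * a mod ?p + a < ?p" unfolding v_def .
    have "poly (bpoly 1 s :: 'p mod_ring poly) (of_nat a) = 0"
      by (rule bpoly_root[OF _ _ _ _ h]) (use assms a a1 in auto)
    thus ?thesis using a by simp
  next
    assume "w + (?p - a) < ?p"
    hence h: "s * (?p - a) mod ?p + (?p - a) < ?p" unfolding w_def .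
    have "poly (bpoly 1 s :: 'p mod_ring poly) (of_nat (?p - a)) = 0"
      by (rule bpoly_root[OF _ _ _ _ h]) (use assms a a1 in auto)
    thus ?thesis using mx by simp
  qed
qed

lemma factor_roots:
  fixes q :: "'a::field poly"
  assumes "finite A" "\<forall>a\<in>A. poly q a = 0" "card A = degree q" "q \<noteq> 0"
  shows "q = smult (lead_coeff q) (\<Prod>a\<in>A. [:-a, 1:])"
  using assms
proof (induction A arbitrary: q rule: finite_induct)
  case empty
  hence "degree q = 0" by simp
  hence "[:coeff q 0:] = q" by (rule degree_0_id)
  thus ?case using \<open>degree q = 0\<close> by simp
next
  case (insert a A)
  have "poly q a = 0" using insert.prems by simp
  hence "[:-a, 1:] dvd q" by (simp add: poly_eq_0_iff_dvd)
  then obtain r where r: "q = [:-a, 1:] * r" by (auto simp: dvd_def)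
  have r0: "r \<noteq> 0" using r insert.prems by auto
  have dq: "degree q = Suc (degree r)" using r0 unfolding r by (subst degree_mult_eq) auto
  have roots: "\<forall>x\<in>A. poly r x = 0"
  proof
    fix x assume x: "x \<in> A"
    hence "x \<noteq> a" using insert.hyps by auto
    moreover have "poly q x = 0" using insert.prems x by auto
    ultimately show "poly r x = 0" using r by simp
  qed
  have "card A = degree r" using insert.prems insert.hyps dq by simp
  hence IH: "r = smult (lead_coeff r) (\<Prod>a\<in>A. [:-a, 1:])" using insert.IH roots r0 by blast
  have lc: "lead_coeff q = lead_coeff r" unfolding r lead_coeff_mult by simp
  have "q = [:-a, 1:] * smult (lead_coeff r) (\<Prod>a\<in>A. [:-a, 1:])" using r IH by simp
  also have "\<dots> = smult (lead_coeff q) (\<Prod>a\<in>insert a A. [:-a, 1:])"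
    using insert.hyps lc by (simp add: mult_smult_right)
  finally show ?case .
qed



theorem lemma11:
  fixes s :: nat
  assumes "odd (CARD('p::prime_card))"
    and "0 < s" and "s < CARD('p) - 1"
  shows "bpoly 1 s * pcompose (bpoly 1 s) [:0, -1:]
           = 1 - monom (1 :: 'p mod_ring) (CARD('p) - 1)
         \<and> degree (bpoly 1 s :: 'p mod_ring poly) = (CARD('p) - 1) div 2
         \<and> (\<exists>c A. c \<noteq> 0 \<and> finite A \<and>
           (bpoly 1 s :: 'p mod_ring poly) = smult c (\<Prod>a\<in>A. [:- a, 1:]))"
proof -
  let ?p = "CARD('p)"
  let ?b = "bpoly 1 s :: 'p mod_ring poly"
  let ?h = "(?p - 1) div 2"
  have p1: "1 < ?p" using prime_gt_1_nat[OF prime_card] .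
  have s_lt: "s < ?p" using assms(3) by linarith
  have cardU: "card (UNIV :: 'p mod_ring set) = ?p" by simp
  have degb: "degree ?b \<le> ?h"
  proof -
    have "degree (Bexp s :: 'p mod_ring poly) \<le> ?h" by (rule degree_Bexp)
    thus ?thesis using bpoly_eq_Bexp[OF assms(2) s_lt] by simp
  qed
  have b0: "poly ?b 0 = 1" by (rule bpoly_at0) (use assms in auto)
  have bnz: "?b \<noteq> 0" using b0 by auto
  define A where "A = {x. poly ?b x = 0}"
  have finA: "finite A" by simp
  have cardA_le: "card A \<le> degree ?b" unfolding A_def by (rule card_poly_roots_bound[OF bnz])
  have pm: "poly ?b x = 0 \<or> poly ?b (-x) = 0" if "x \<noteq> 0" for x
    by (rule bpoly_root_pm) (use assms that in auto)
  have cover: "UNIV - {0} \<subseteq> A \<union> uminus ` A"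
  proof
    fix x :: "'p mod_ring" assume "x \<in> UNIV - {0}"
    hence "x \<noteq> 0" by simp
    from pm[OF this] show "x \<in> A \<union> uminus ` A"
    proof
      assume "poly ?b x = 0" thus ?thesis unfolding A_def by simp
    next
      assume "poly ?b (-x) = 0"
      hence "-x \<in> A" unfolding A_def by simp
      hence "- (- x) \<in> uminus ` A" by blast
      thus ?thesis by simp
    qed
  qed
  have "?p - 1 = card (UNIV - {0 :: 'p mod_ring})" by (simp add: card_Diff_singleton)
  also have "\<dots> \<le> card (A \<union> uminus ` A)" by (rule card_mono) (use finA cover in auto)
  also have "\<dots> \<le> card A + card (uminus ` A)" by (rule card_Un_le)
  also have "\<dots> \<le> card A + card A" using card_image_le[OF finA, of uminus] by simp
  finally have "?h \<le> card A" by linarith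
  hence degeq: "degree ?b = ?h" and cardA: "card A = degree ?b" using degb cardA_le by linarith+
  have fact3: "\<exists>c A. c \<noteq> 0 \<and> finite A \<and> ?b = smult c (\<Prod>a\<in>A. [:- a, 1:])"
  proof (intro exI conjI)
    show "lead_coeff ?b \<noteq> 0" using bnz by simp
    show "finite A" by (rule finA)
    show "?b = smult (lead_coeff ?b) (\<Prod>a\<in>A. [:- a, 1:])"
      by (rule factor_roots[OF finA _ cardA bnz]) (simp add: A_def)
  qed
  have fact1: "?b * pcompose ?b [:0, -1:] = 1 - monom 1 (?p - 1)"
  proof (rule poly_eqI_degree[where A = UNIV])
    have two: "2 * ?h = ?p - 1" using assms(1) p1 by (auto elim!: oddE)
    have "degree (?b * pcompose ?b [:0, -1:]) \<le> degree ?b + degree (pcompose ?b [:0, -1:])"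
      by (rule degree_mult_le)
    also have "\<dots> = degree ?b + degree ?b" by (simp add: degree_pcompose)
    also have "\<dots> \<le> ?p - 1" using degb two by linarith
    finally show "degree (?b * pcompose ?b [:0, -1:]) < card (UNIV :: 'p mod_ring set)"
      using p1 unfolding cardU by linarith
    have "degree (1 - monom (1 :: 'p mod_ring) (?p - 1)) \<le> ?p - 1"
      by (rule degree_diff_le) (auto simp: degree_monom_le)
    thus "degree (1 - monom (1 :: 'p mod_ring) (?p - 1)) < card (UNIV :: 'p mod_ring set)"
      using p1 unfolding cardU by linarith
  next
    fix x :: "'p mod_ring" assume "x \<in> UNIV"
    have lhs: "poly (?b * pcompose ?b [:0, -1:]) x = poly ?b x * poly ?b (-x)"
      by (simp add: poly_pcompose)
    have rhs: "poly (1 - monom (1 :: 'p mod_ring) (?p - 1)) x = 1 - x ^ (?p - 1)"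
      by (simp add: poly_monom)
    show "poly (?b * pcompose ?b [:0, -1:]) x = poly (1 - monom (1 :: 'p mod_ring) (?p - 1)) x"
    proof (cases "x = 0")
      case True
      thus ?thesis unfolding lhs rhs using b0 p1 by simp
    next
      case False
      have "x ^ (?p - 1) = 1" by (rule pow_card_minus1[OF False])
      moreover have "poly ?b x * poly ?b (-x) = 0" using pm[OF False] by auto
      ultimately show ?thesis unfolding lhs rhs by simp
    qed
  qed
  show ?thesis using fact1 degeq fact3 by blast
qed


end
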